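(* Let $k\ge2$ and let $(L,b,f)$ be an even $\Phi_{2^k}$-lattice such that the isometry $D_f$ of $D_L$ has order at most $2^{k-2}$. Then $\delta_L=0$.
   Context: A $\Phi_{n}$-lattice is a $\mathbb{Z}$-lattice $(L,b)$ with an isometry $f$ with $\Phi_n(f)=0$ ($\Phi_n$ the $n$-th cyclotomic polynomial). $D_L=L^\vee/L$ and $D_f$ is the induced isometry. Under these hypotheses $L$ is $2$-elementary, and for a $2$-elementary integral lattice, $\delta_L=0$ if $n(L^\vee)\subseteq\mathbb{Z}$ (i.e. $b(x,x)\in\mathbb{Z}$ for all $x\in L^\vee$) and $\delta_L=1$ otherwise. *)

theory Defs
  imports "HOL-Analysis.Analysis"
begin

text \<open>A Z-lattice of rank CARD('n) is modelled as the standard lattice Z^n inside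
  R^n, with the bilinear form b given by a Gram matrix G; an isometry f is given by a matrix F.\<close>

definition int_lattice :: "(real^'n) set" where
  "int_lattice = {x. \<forall>i. x $ i \<in> \<int>}"

definition integral_matrix :: "real^'n^'m \<Rightarrow> bool" where
  "integral_matrix A \<longleftrightarrow> (\<forall>i j. A $ i $ j \<in> \<int>)"

definition bform :: "real^'n^'n \<Rightarrow> real^'n \<Rightarrow> real^'n \<Rightarrow> real" where
  "bform G x y = x \<bullet> (G *v y)"

definition is_Z_lattice :: "real^'n^'n \<Rightarrow> bool" where
  "is_Z_lattice G \<longleftrightarrow> integral_matrix G \<and> transpose G = G \<and> det G \<noteq> 0"

definition even_lattice :: "real^'n^'n \<Rightarrow> bool" where
  "even_lattice G \<longleftrightarrow> (\<forall>x\<in>int_lattice. \<exists>m::int. bform G x x = 2 * of_int m)"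

definition lattice_isometry :: "real^'n^'n \<Rightarrow> real^'n^'n \<Rightarrow> bool" where
  "lattice_isometry G F \<longleftrightarrow> integral_matrix F \<and>
     (\<forall>x y. bform G (F *v x) (F *v y) = bform G x y)"

text \<open>Phi_{2^k}(x) = x^(2^(k-1)) + 1 for k \<ge> 1, so Phi_{2^k}(f) = 0 means f^(2^(k-1)) = -id.\<close>
definition cyclotomic_2pow_root :: "nat \<Rightarrow> real^'n^'n \<Rightarrow> bool" where
  "cyclotomic_2pow_root k F \<longleftrightarrow> (\<forall>x. ((\<lambda>v. F *v v) ^^ (2 ^ (k - 1))) x + x = 0)"

definition dual_lattice :: "real^'n^'n \<Rightarrow> (real^'n) set" where
  "dual_lattice G = {y. \<forall>x\<in>int_lattice. bform G y x \<in> \<int>}"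

text \<open>Order of the induced isometry D_f on D_L = L^dual / L.\<close>
definition disc_isometry_order :: "real^'n^'n \<Rightarrow> real^'n^'n \<Rightarrow> nat" where
  "disc_isometry_order G F = (LEAST m. 0 < m \<and>
      (\<forall>y\<in>dual_lattice G. ((\<lambda>v. F *v v) ^^ m) y - y \<in> int_lattice))"

definition delta_L :: "real^'n^'n \<Rightarrow> nat" where
  "delta_L G = (if \<forall>y\<in>dual_lattice G. bform G y y \<in> \<int> then 0 else 1)"

end

theory Submission
  imports Defs "HOL-Computational_Algebra.Primes"
begin

lemma intlat_diff: "x \<in> int_lattice \<Longrightarrow> y \<in> int_lattice \<Longrightarrow> x - y \<in> int_lattice"
  by (simp add: int_lattice_def)

lemma intlat_add: "x \<in> int_lattice \<Longrightarrow> y \<in> int_lattice \<Longrightarrow> x + y \<in> int_lattice"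
  by (simp add: int_lattice_def)

lemma intlat_mult: "integral_matrix F \<Longrightarrow> x \<in> int_lattice \<Longrightarrow> F *v x \<in> int_lattice"
  unfolding int_lattice_def integral_matrix_def matrix_vector_mult_def
  by (auto intro!: Ints_sum Ints_mult)

lemma funpow_lat: "integral_matrix (F::real^'n^'n) \<Longrightarrow> x \<in> int_lattice \<Longrightarrow> ((\<lambda>v. F *v v) ^^ j) x \<in> int_lattice"
  by (induction j) (auto intro: intlat_mult)

lemma funpow_diff: "((\<lambda>v. (F::real^'n^'n) *v v) ^^ j) (x - y) = ((\<lambda>v. F *v v) ^^ j) x - ((\<lambda>v. F *v v) ^^ j) y"
  by (induction j) (auto simp: matrix_vector_mult_diff_distrib)

lemma funpow_neg: "((\<lambda>v. (F::real^'n^'n) *v v) ^^ j) (- x) = - ((\<lambda>v. F *v v) ^^ j) x"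
  using funpow_diff[where F=F and j=j and x=0 and y=x] funpow_diff[where F=F and j=j and x=0 and y=0] by simp

lemma funpow_iso: "lattice_isometry G (F::real^'n^'n) \<Longrightarrow>
  bform G (((\<lambda>v. F *v v) ^^ j) x) (((\<lambda>v. F *v v) ^^ j) y) = bform G x y"
  by (induction j) (auto simp: lattice_isometry_def)

lemma bform_sym: "transpose G = G \<Longrightarrow> bform G x y = bform G y x"
  unfolding bform_def
  by (metis dot_lmul_matrix inner_commute transpose_matrix_vector)

theorem corollary3p11:
  fixes G F :: "real^'n^'n" and k :: nat
  assumes "k \<ge> 2"
    and "is_Z_lattice G"
    and "lattice_isometry G F"
    and "cyclotomic_2pow_root k F"
    and "even_lattice G"
    and "disc_isometry_order G F \<le> 2 ^ (k - 2)"
  shows "delta_L G = 0"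
proof -
  define Fp where "Fp = (\<lambda>j. (\<lambda>v. F *v v) ^^ j)"
  define P where "P = (\<lambda>a. \<forall>y\<in>dual_lattice G. Fp a y - y \<in> int_lattice)"
  have intF: "integral_matrix F" using assms(3) by (simp add: lattice_isometry_def)
  have symG: "transpose G = G" using assms(2) by (simp add: is_Z_lattice_def)
  have Fadd: "Fp (a + b) x = Fp a (Fp b x)" for a b x
    unfolding Fp_def funpow_add by simp
  have Fhalf: "Fp (2 ^ (k - 1)) x = - x" for x
    using assms(4) unfolding cyclotomic_2pow_root_def Fp_def by (simp add: eq_neg_iff_add_eq_0)
  have kk: "2 ^ k = 2 ^ (k - 1) + (2 ^ (k - 1) :: nat)"
    using assms(1) by (cases k) auto
  have Ffull: "Fp (2 ^ k) x = x" for x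
    unfolding kk Fadd Fhalf by (simp add: Fp_def funpow_neg Fhalf[unfolded Fp_def])
  have P2k: "P (2 ^ k)" unfolding P_def Ffull by (simp add: int_lattice_def)
  have Padd: "P (a + b)" if "P a" "P b" for a b
  proof (unfold P_def, intro ballI)
    fix y assume y: "y \<in> dual_lattice G"
    have "Fp (a + b) y - y = Fp a (Fp b y - y) + (Fp a y - y)"
      unfolding Fadd by (simp add: Fp_def funpow_diff)
    moreover have "Fp a (Fp b y - y) \<in> int_lattice"
      using that(2) y unfolding P_def Fp_def by (auto intro: funpow_lat intF)
    ultimately show "Fp (a + b) y - y \<in> int_lattice"
      using that(1) y intlat_add[of "Fp a (Fp b y - y)" "Fp a y - y"] unfolding P_def by (simp add: algebra_simps)
  qed
  have Pmul: "P (q * a)" if "P a" "q > 0" for q a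
    using that(2)
  proof (induction q)
    case 0 then show ?case by simp
  next
    case (Suc q)
    then show ?case
      by (cases "q = 0") (auto simp: that(1) intro: Padd)
  qed
  have Psub: "P r" if "P a" "P (a + r)" "a + r \<le> 2 ^ k" for a r
  proof (unfold P_def, intro ballI)
    fix y assume y: "y \<in> dual_lattice G"
    have "Fp a (Fp r y - y) = (Fp (a + r) y - y) - (Fp a y - y)"
      unfolding Fadd[of a r] by (simp add: Fp_def funpow_diff)
    hence "Fp a (Fp r y - y) \<in> int_lattice"
      using that(1,2) y intlat_diff[of "Fp (a + r) y - y" "Fp a y - y"] unfolding P_def by simp
    hence "Fp (2 ^ k - a) (Fp a (Fp r y - y)) \<in> int_lattice"
      unfolding Fp_def by (auto intro: funpow_lat intF)
    moreover have "Fp (2 ^ k - a) (Fp a (Fp r y - y)) = Fp r y - y"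
      using Fadd[of "2 ^ k - a" a, symmetric] Ffull that(3) by simp
    ultimately show "Fp r y - y \<in> int_lattice" by simp
  qed
  define m where "m = disc_isometry_order G F"
  have m_def': "m = (LEAST m. 0 < m \<and> P m)"
    unfolding m_def disc_isometry_order_def P_def Fp_def by simp
  have ex: "\<exists>m. 0 < m \<and> P m" using P2k by (intro exI[of _ "2 ^ k"]) simp
  have mP: "0 < m \<and> P m" unfolding m_def' by (rule LeastI_ex[OF ex])
  have mmin: "\<not> (0 < r \<and> P r)" if "r < m" for r
    using not_less_Least[of r "\<lambda>m. 0 < m \<and> P m"] that unfolding m_def' by blast
  have mdvd: "m dvd 2 ^ k"
  proof -
    define q where "q = 2 ^ k div m"
    define r where "r = 2 ^ k mod m"
    have eq: "q * m + r = 2 ^ k" unfolding q_def r_def by simp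
    have rm: "r < m" unfolding r_def using mP by simp
    show ?thesis
    proof (cases "q = 0")
      case True
      then have "r = 2 ^ k" using eq by simp
      then show ?thesis using rm mmin[of "2 ^ k"] P2k by simp
    next
      case False
      have "P (q * m)" using Pmul mP False by auto
      hence "P r" using Psub[of "q * m" r] eq P2k by simp
      hence "r = 0" using mmin rm by auto
      thus ?thesis unfolding r_def by auto
    qed
  qed
  then obtain j where j: "j \<le> k" "m = 2 ^ j"
    using divides_primepow_nat[of 2 m k] by auto
  have "m \<le> 2 ^ (k - 2)" using assms(6) m_def by simp
  hence "j \<le> k - 2" using j by simp
  hence "2 ^ (k - 2) = 2 ^ (k - 2 - j) * m" using j by (simp add: power_add[symmetric])
  hence Ph: "P (2 ^ (k - 2))" using Pmul[of m "2 ^ (k - 2 - j)"] mP by simp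
  define h where "h = Fp (2 ^ (k - 2))"
  have hh: "h (h y) = - y" for y
  proof -
    have "(2::nat) ^ (k - 2) + 2 ^ (k - 2) = 2 ^ (k - 1)"
      using assms(1) by (cases k; cases "k - 1") auto
    thus ?thesis unfolding h_def using Fadd[of "2 ^ (k - 2)" "2 ^ (k - 2)" y] Fhalf by simp
  qed
  have hlin: "h (a - b) = h a - h b" for a b unfolding h_def Fp_def by (rule funpow_diff)
  have hiso: "bform G (h a) (h b) = bform G a b" for a b
    unfolding h_def Fp_def using assms(3) by (rule funpow_iso)
  have bsym: "bform G a b = bform G b a" for a b using symG by (rule bform_sym)
  have bdiff1: "bform G (a - b) c = bform G a c - bform G b c" for a b c
    by (simp add: bform_def inner_diff_left)
  have bdiff2: "bform G c (a - b) = bform G c a - bform G c b" for a b c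
    by (simp add: bform_def inner_diff_right matrix_vector_mult_diff_distrib)
  have bneg: "bform G (- a) c = - bform G a c" for a c
    by (simp add: bform_def)
  show ?thesis
  proof -
    have "bform G y y \<in> \<int>" if y: "y \<in> dual_lattice G" for y
    proof -
      define x where "x = h y - y"
      have xL: "x \<in> int_lattice" using Ph y unfolding P_def x_def h_def by auto
      have z: "bform G (h y) y = 0"
      proof -
        have "bform G (h y) y = bform G (h (h y)) (h y)" using hiso by simp
        also have "\<dots> = - bform G y (h y)" by (simp add: hh bneg)
        also have "\<dots> = - bform G (h y) y" using bsym by simp
        finally show ?thesis by simp
      qed
      have "bform G x x = 2 * bform G y y"
        unfolding x_def bdiff1 bdiff2 using z hiso bsym[of y "h y"] by simp
      moreover obtain mm :: int where "bform G x x = 2 * of_int mm"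
        using assms(5) xL unfolding even_lattice_def by blast
      ultimately have "bform G y y = of_int mm" by simp
      thus ?thesis by simp
    qed
    thus ?thesis unfolding delta_L_def by auto
  qed
qed

end
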